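(* Fix a task $i$ and $L\ge L^{(i)}$. Suppose that at every checkpoint $\nu\in\mathcal S_u$ the interval satisfies $u^{(i)}(\overline y^{(i)}_\nu)\in[\underline u^{(i)}_\nu,\overline u^{(i)}_\nu]$, and that $f^{\star(i)}-\overline y^{(i)}_s\le\epsilon^{f,(i)}_s$ for all $s\ge1$. Then for all $s\ge1$, $$\underline U^{(i)}_s(L)\le U^{(i)}\le\overline U^{(i)}_s(L).$$
   Context: Task $i$ has objective $f^{(i)}$ with maximum $f^{\star(i)}$, incumbents $\overline y^{(i)}_s:=\max_{r\le s}f^{(i)}(x^{(i)}_r)$ (nondecreasing in $s$), utility $u^{(i)}:\mathbb R\to[0,1]$ monotone nondecreasing and $L^{(i)}$-Lipschitz, and $U^{(i)}:=u^{(i)}(f^{\star(i)})$. $\epsilon^{f,(i)}_s>0$ are given gap bounds. Utility is queried at local times in a set $\mathcal S_u\subseteq\mathbb N$, each query $\nu$ producing an interval $[\underline u^{(i)}_\nu,\overline u^{(i)}_\nu]$. Let $\nu=\nu^{(i)}_s:=\max\{r\le s:r\in\mathcal S_u\}$ (most recent checkpoint). Define $\overline u^{(i)}_s(L):=\min\{1,\overline u^{(i)}_\nu+L(\overline y^{(i)}_s-\overline y^{(i)}_\nu)\}$, $\underline u^{(i)}_s(L):=\underline u^{(i)}_\nu$ (and $\overline u^{(i)}_s(L)=1$, $\underline u^{(i)}_s(L)=0$ if no checkpoint has occurred yet), $\underline U^{(i)}_s(L):=\underline u^{(i)}_s(L)$, $\overline U^{(i)}_s(L):=\min\{1,\overline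 u^{(i)}_s(L)+L\epsilon^{f,(i)}_s\}$. *)

theory Defs
  imports "HOL-Analysis.Analysis"
begin

definition incumbent :: "('x \<Rightarrow> real) \<Rightarrow> (nat \<Rightarrow> 'x) \<Rightarrow> nat \<Rightarrow> real" where
  "incumbent f x s = Max ((\<lambda>r. f (x r)) ` {1..s})"

definition last_checkpoint :: "nat set \<Rightarrow> nat \<Rightarrow> nat" where
  "last_checkpoint Su s = Max {r \<in> Su. 1 \<le> r \<and> r \<le> s}"

definition has_checkpoint :: "nat set \<Rightarrow> nat \<Rightarrow> bool" where
  "has_checkpoint Su s \<longleftrightarrow> (\<exists>r \<in> Su. 1 \<le> r \<and> r \<le> s)"

definition u_upper :: "('x \<Rightarrow> real) \<Rightarrow> (nat \<Rightarrow> 'x) \<Rightarrow> nat set \<Rightarrow> (nat \<Rightarrow> real) \<Rightarrow> real \<Rightarrow> nat \<Rightarrow> real" where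
  "u_upper f x Su uhi L s =
     (if has_checkpoint Su s then
        (let \<nu> = last_checkpoint Su s in
          min 1 (uhi \<nu> + L * (incumbent f x s - incumbent f x \<nu>)))
      else 1)"

definition u_lower :: "nat set \<Rightarrow> (nat \<Rightarrow> real) \<Rightarrow> nat \<Rightarrow> real" where
  "u_lower Su ulo s = (if has_checkpoint Su s then ulo (last_checkpoint Su s) else 0)"

definition U_lower :: "nat set \<Rightarrow> (nat \<Rightarrow> real) \<Rightarrow> nat \<Rightarrow> real" where
  "U_lower Su ulo s = u_lower Su ulo s"

definition U_upper :: "('x \<Rightarrow> real) \<Rightarrow> (nat \<Rightarrow> 'x) \<Rightarrow> nat set \<Rightarrow> (nat \<Rightarrow> real) \<Rightarrow> (nat \<Rightarrow> real) \<Rightarrow> real \<Rightarrow> nat \<Rightarrow> real" where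
  "U_upper f x Su uhi eps L s = min 1 (u_upper f x Su uhi L s + L * eps s)"

end

theory Submission
  imports Defs
begin

lemma inc_le: "(\<forall>z. f z \<le> (c::real)) \<Longrightarrow> 1 \<le> s \<Longrightarrow> incumbent f x s \<le> c"
  unfolding incumbent_def by (subst Max_le_iff) auto

lemma inc_mono: "1 \<le> a \<Longrightarrow> a \<le> b \<Longrightarrow> incumbent f x a \<le> incumbent f x b"
  unfolding incumbent_def by (rule Max_mono) auto

lemma lc_props: "has_checkpoint Su s \<Longrightarrow> last_checkpoint Su s \<in> Su \<and> 1 \<le> last_checkpoint Su s \<and> last_checkpoint Su s \<le> s"
proof -
  assume h: "has_checkpoint Su s"
  have fin: "finite {r \<in> Su. 1 \<le> r \<and> r \<le> s}" by (rule finite_subset[of _ "{..s}"]) auto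
  have ne: "{r \<in> Su. 1 \<le> r \<and> r \<le> s} \<noteq> {}" using h unfolding has_checkpoint_def by auto
  show ?thesis using Max_in[OF fin ne] unfolding last_checkpoint_def by auto
qed

theorem lemmaD3:
  fixes f :: "'x \<Rightarrow> real" and x :: "nat \<Rightarrow> 'x" and fstar :: real
    and u :: "real \<Rightarrow> real" and Lu L :: real
    and eps :: "nat \<Rightarrow> real" and Su :: "nat set" and ulo uhi :: "nat \<Rightarrow> real"
  assumes fmax: "\<forall>z. f z \<le> fstar" and fstar_att: "\<exists>z. f z = fstar"
    and u_range: "\<forall>t. 0 \<le> u t \<and> u t \<le> 1"
    and u_mono: "mono u"
    and Lu_nonneg: "0 \<le> Lu"
    and u_lip: "\<forall>a b. \<bar>u a - u b\<bar> \<le> Lu * \<bar>a - b\<bar>"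
    and eps_pos: "\<forall>s. 0 < eps s"
    and L_ge: "L \<ge> Lu"
    and valid: "\<forall>\<nu>\<in>Su. 1 \<le> \<nu> \<longrightarrow>
                   ulo \<nu> \<le> u (incumbent f x \<nu>) \<and> u (incumbent f x \<nu>) \<le> uhi \<nu>"
    and gap: "\<forall>s\<ge>1. fstar - incumbent f x s \<le> eps s"
    and s1: "s \<ge> 1"
  shows "U_lower Su ulo s \<le> u fstar \<and> u fstar \<le> U_upper f x Su uhi eps L s"
  proof -
  have ys: "incumbent f x s \<le> fstar" using inc_le fmax s1 by blast
  have L0: "0 \<le> L" using L_ge Lu_nonneg by linarith
  have e0: "0 \<le> L * eps s" using L0 eps_pos by (simp add: less_imp_le)
  have A: "u fstar \<le> u (incumbent f x s) + L * eps s"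
  proof -
    have "u fstar - u (incumbent f x s) \<le> Lu * \<bar>fstar - incumbent f x s\<bar>" using u_lip[rule_format, of fstar "incumbent f x s"] by linarith
    also have "\<dots> \<le> L * (fstar - incumbent f x s)" using ys L_ge Lu_nonneg by (simp add: mult_right_mono)
    also have "\<dots> \<le> L * eps s" using gap s1 L0 by (simp add: mult_left_mono)
    finally show ?thesis by linarith
  qed
  show ?thesis
  proof (cases "has_checkpoint Su s")
    case False
    then show ?thesis using u_range e0 unfolding U_lower_def u_lower_def U_upper_def u_upper_def by auto
  next
    case True
    define n where "n = last_checkpoint Su s"
    have n: "n \<in> Su" "1 \<le> n" "n \<le> s" using lc_props[OF True] n_def by auto
    have v: "ulo n \<le> u (incumbent f x n)" "u (incumbent f x n) \<le> uhi n" using valid n by auto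
    have yn: "incumbent f x n \<le> fstar" using inc_le fmax n by blast
    have mn: "incumbent f x n \<le> incumbent f x s" using inc_mono n by blast
    have lo: "ulo n \<le> u fstar" using v yn u_mono by (meson monoD order_trans)
    have "u (incumbent f x s) - u (incumbent f x n) \<le> Lu * \<bar>incumbent f x s - incumbent f x n\<bar>" using u_lip[rule_format, of "incumbent f x s" "incumbent f x n"] by linarith
    also have "\<dots> \<le> L * (incumbent f x s - incumbent f x n)" using mn L_ge Lu_nonneg by (simp add: mult_right_mono)
    finally have B: "u (incumbent f x s) \<le> uhi n + L * (incumbent f x s - incumbent f x n)" using v by linarith
    have "u fstar \<le> 1" using u_range by auto
    then show ?thesis using lo A B True e0 unfolding U_lower_def u_lower_def U_upper_def u_upper_def n_def[symmetric] Let_def by (auto simp: min_def)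
  qed
qed

end
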